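(* Let $\Omega\subset\mathbb{R}^n$ be a bounded convex domain, $u,\varphi\in C(\overline\Omega)$ convex, and $W\subset\Omega$ a nonempty compact set such that $\mathscr M u(E)\le\mathscr M\varphi(E)$ for every Borel set $E$ with $W\subset E\subset\Omega$. Then $$\max_{x\in W}\{u(x)-\varphi(x)\}\ge\min_{x\in\partial\Omega}\{u(x)-\varphi(x)\}.$$
   Context: $\mathscr M u(E)=|\partial u(E)|$ is the Monge–Ampère measure of a convex function. *)

theory Defs
  imports "HOL-Analysis.Analysis"
begin

text \<open>Subdifferential (set of supporting slopes) of u at x, relative to the domain \<Omega>.\<close>
definition subdiff :: "'a::euclidean_space set \<Rightarrow> ('a \<Rightarrow> real) \<Rightarrow> 'a \<Rightarrow> 'a set" where
  "subdiff \<Omega> u x = {p. \<forall>y\<in>\<Omega>. u y \<ge> u x + inner p (y - x)}"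

text \<open>Monge-Ampere measure: Lebesgue measure of the image of E under the subdifferential.\<close>
definition monge_ampere :: "'a::euclidean_space set \<Rightarrow> ('a \<Rightarrow> real) \<Rightarrow> 'a set \<Rightarrow> ennreal" where
  "monge_ampere \<Omega> u E = emeasure lebesgue (\<Union>x\<in>E. subdiff \<Omega> u x)"

end

theory Submission
  imports Defs
begin

lemma subdiff_closed:
  fixes \<Omega> E :: "'a::euclidean_space set" and f :: "'a \<Rightarrow> real"
  assumes cf: "continuous_on (closure \<Omega>) f" and E: "compact E" "E \<subseteq> \<Omega>"
  shows "closed (\<Union>x\<in>E. subdiff \<Omega> f x)"
  unfolding closed_sequential_limits
proof (intro allI impI, elim conjE)
  fix s :: "nat \<Rightarrow> 'a" and l
  assume s: "\<forall>n. s n \<in> (\<Union>x\<in>E. subdiff \<Omega> f x)" and sl: "s \<longlonglongrightarrow> l"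
  then have "\<forall>n. \<exists>y. y \<in> E \<and> s n \<in> subdiff \<Omega> f y" by blast
  from choice[OF this] obtain x where "\<forall>n. x n \<in> E \<and> s n \<in> subdiff \<Omega> f (x n)" by blast
  then have x: "\<And>n. x n \<in> E" "\<And>n. s n \<in> subdiff \<Omega> f (x n)" by auto
  obtain z r where z: "z \<in> E" "strict_mono (r::nat\<Rightarrow>nat)" "(x \<circ> r) \<longlonglongrightarrow> z"
    using seq_compactE[OF compact_imp_seq_compact[OF E(1)]] x(1) by metis
  have zc: "z \<in> closure \<Omega>" using z E closure_subset by blast
  have xc: "\<And>n. x n \<in> closure \<Omega>" using x E closure_subset by blast
  have "l \<in> subdiff \<Omega> f z" unfolding subdiff_def
  proof (intro CollectI ballI)
    fix y assume y: "y \<in> \<Omega>"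
    have "((\<lambda>n. f ((x \<circ> r) n) + inner ((s \<circ> r) n) (y - (x \<circ> r) n)) \<longlonglongrightarrow> f z + inner l (y - z))"
    proof (intro tendsto_intros)
      show "(\<lambda>n. f ((x \<circ> r) n)) \<longlonglongrightarrow> f z"
        using continuous_on_tendsto_compose[OF cf z(3) zc] xc by (simp add: o_def)
      show "(s \<circ> r) \<longlonglongrightarrow> l" using LIMSEQ_subseq_LIMSEQ[OF sl z(2)] .
      show "(x \<circ> r) \<longlonglongrightarrow> z" by (rule z(3))
    qed
    moreover have "\<And>n. f ((x \<circ> r) n) + inner ((s \<circ> r) n) (y - (x \<circ> r) n) \<le> f y"
      using x(2) y unfolding subdiff_def by auto
    ultimately show "f z + inner l (y - z) \<le> f y"
      by (intro tendsto_le[OF _ tendsto_const]) auto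
  qed
  then show "l \<in> (\<Union>x\<in>E. subdiff \<Omega> f x)" using z by blast
qed

lemma subdiff_bounded:
  fixes \<Omega> E :: "'a::euclidean_space set" and f :: "'a \<Rightarrow> real"
  assumes cf: "continuous_on (closure \<Omega>) f" and O: "open \<Omega>" "bounded \<Omega>"
    and E: "compact E" "E \<subseteq> \<Omega>"
  shows "bounded (\<Union>x\<in>E. subdiff \<Omega> f x)"
proof (cases "E = {}")
  case True then show ?thesis by simp
next
  case False
  have "compact (f ` closure \<Omega>)"
    using compact_continuous_image[OF cf] O by (simp add: compact_closure)
  then have "bounded (f ` closure \<Omega>)" by (rule compact_imp_bounded)
  then obtain B where "\<forall>z\<in>f ` closure \<Omega>. norm z \<le> B" unfolding bounded_iff by blast
  then have B: "\<And>y. y \<in> closure \<Omega> \<Longrightarrow> norm (f y) \<le> B" by blast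
  have "- \<Omega> \<noteq> {}"
  proof
    assume "- \<Omega> = {}"
    then have "\<Omega> = UNIV" by auto
    then show False using O(2) not_bounded_UNIV by simp
  qed
  then have rpos: "0 < setdist E (- \<Omega>)"
  proof -
    have "closed (- \<Omega>)" using O(1) by (simp add: open_closed)
    moreover have "E \<inter> - \<Omega> = {}" using E(2) by blast
    ultimately show ?thesis using setdist_gt_0_compact_closed[OF E(1)] False \<open>- \<Omega> \<noteq> {}\<close> by blast
  qed
  define r where "r = setdist E (- \<Omega>)"
  have bd: "norm p \<le> 4 * B / r" if x: "x \<in> E" and p: "p \<in> subdiff \<Omega> f x" for x p
  proof (cases "p = 0")
    case True
    have "x \<in> closure \<Omega>" using x E closure_subset by blast
    then have "norm (f x) \<le> B" by (rule B)
    then have "0 \<le> B" using norm_ge_zero[of "f x"] by linarith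
    then show ?thesis using True rpos r_def by simp
  next
    case False
    define y where "y = x + (r / 2 / norm p) *\<^sub>R p"
    have dxy: "dist x y = r / 2"
    proof -
      have "dist x y = norm ((r / 2 / norm p) *\<^sub>R p)" by (simp add: y_def dist_norm)
      also have "\<dots> = \<bar>r / 2 / norm p\<bar> * norm p" by (rule norm_scaleR)
      also have "\<dots> = r / 2" using False rpos unfolding r_def by simp
      finally show ?thesis .
    qed
    have "y \<in> \<Omega>"
    proof (rule ccontr)
      assume "y \<notin> \<Omega>"
      then have "setdist E (- \<Omega>) \<le> dist x y" using setdist_le_dist x by blast
      then show False using dxy rpos r_def by simp
    qed
    then have "f y \<ge> f x + inner p (y - x)" using p unfolding subdiff_def by auto
    moreover have "inner p (y - x) = r / 2 * norm p"
    proof -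
      have "inner p (y - x) = (r / 2 / norm p) * inner p p" by (simp add: y_def)
      also have "inner p p = norm p * norm p" by (simp add: dot_square_norm power2_eq_square)
      finally show ?thesis using False by simp
    qed
    moreover have "norm (f y) \<le> B" "norm (f x) \<le> B"
      using B \<open>y \<in> \<Omega>\<close> x E closure_subset by blast+
    ultimately have "r / 2 * norm p \<le> 2 * B" by auto
    then have "r * norm p \<le> 4 * B" by simp
    then show ?thesis using rpos r_def by (simp add: field_simps)
  qed
  show ?thesis unfolding bounded_iff using bd by blast
qed

lemma subdiff_touch:
  fixes \<Omega> E :: "'a::euclidean_space set" and u :: "'a \<Rightarrow> real"
  assumes cu: "continuous_on (closure \<Omega>) u" and E: "compact E" "E \<subseteq> \<Omega>" and z: "z \<in> E"
    and out: "\<And>y. y \<in> \<Omega> \<Longrightarrow> y \<notin> E \<Longrightarrow> u y > \<alpha> + inner P y"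
    and D: "\<And>y. y \<in> \<Omega> \<Longrightarrow> norm (y - z) \<le> D"
    and at: "u z - (\<alpha> + inner P z) \<le> - (norm q * D)"
  shows "P + q \<in> (\<Union>x\<in>E. subdiff \<Omega> u x)"
proof -
  define g where "g y = u y - (\<alpha> + inner P y) - inner q (y - z)" for y
  have "continuous_on E u" using continuous_on_subset[OF cu] E(2) closure_subset by blast
  then have "continuous_on E g" unfolding g_def by (intro continuous_intros)
  then obtain z' where z': "z' \<in> E" "\<And>y. y \<in> E \<Longrightarrow> g z' \<le> g y"
    using continuous_attains_inf[OF E(1)] z by blast
  have gz: "g z' \<le> - (norm q * D)" using z'(2)[OF z] at by (simp add: g_def)
  have "g z' \<le> g y" if y: "y \<in> \<Omega>" for y
  proof (cases "y \<in> E")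
    case True then show ?thesis using z' by blast
  next
    case False
    have "inner q (y - z) \<le> norm q * norm (y - z)" by (rule norm_cauchy_schwarz)
    also have "\<dots> \<le> norm q * D" using D[OF y] by (simp add: mult_left_mono)
    finally have "inner q (y - z) \<le> norm q * D" .
    then show ?thesis using out[OF y False] gz by (simp add: g_def)
  qed
  then have "P + q \<in> subdiff \<Omega> u z'"
    unfolding subdiff_def g_def by (auto simp: inner_diff_right inner_add_left algebra_simps)
  then show ?thesis using z' by blast
qed

lemma emeasure_scale_compact:
  fixes S :: "'a::euclidean_space set"
  assumes S: "compact S" and c: "c > 0"
  shows "emeasure lborel ((*\<^sub>R) c ` S) = ennreal (c ^ DIM('a)) * emeasure lborel S"
proof -
  let ?T = "\<lambda>x::'a. 0 + c *\<^sub>R x"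
  have eq: "lborel = density (distr lborel borel ?T) (\<lambda>x. ennreal (\<bar>c\<bar> ^ DIM('a)))"
    using lborel_affine[of c 0] c by simp
  have cl: "closed ((*\<^sub>R) c ` S)" using compact_scaling[OF S] compact_imp_closed by blast
  then have A: "(*\<^sub>R) c ` S \<in> sets borel" by (rule borel_closed)
  have pre: "?T -` ((*\<^sub>R) c ` S) = S" using c by auto
  have "emeasure lborel ((*\<^sub>R) c ` S) =
      emeasure (density (distr lborel borel ?T) (\<lambda>x. ennreal (\<bar>c\<bar> ^ DIM('a)))) ((*\<^sub>R) c ` S)"
    using arg_cong[where f="\<lambda>M. emeasure M ((*\<^sub>R) c ` S)", OF eq] .
  also have "\<dots> = ennreal (\<bar>c\<bar> ^ DIM('a)) * emeasure (distr lborel borel ?T) ((*\<^sub>R) c ` S)"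
    using A by (intro emeasure_density_const) simp
  also have "emeasure (distr lborel borel ?T) ((*\<^sub>R) c ` S) = emeasure lborel (?T -` ((*\<^sub>R) c ` S) \<inter> space lborel)"
    using A by (intro emeasure_distr) auto
  also have "?T -` ((*\<^sub>R) c ` S) \<inter> space lborel = S" using pre by simp
  finally show ?thesis using c by simp
qed

theorem mainTheorem7:
  fixes \<Omega> W :: "'a::euclidean_space set" and u \<phi> :: "'a \<Rightarrow> real"
  assumes "open \<Omega>" "connected \<Omega>" "\<Omega> \<noteq> {}" "bounded \<Omega>" "convex \<Omega>"
    and "continuous_on (closure \<Omega>) u" "convex_on (closure \<Omega>) u"
    and "continuous_on (closure \<Omega>) \<phi>" "convex_on (closure \<Omega>) \<phi>"
    and "compact W" "W \<noteq> {}" "W \<subseteq> \<Omega>"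
    and "\<And>E. E \<in> sets borel \<Longrightarrow> W \<subseteq> E \<Longrightarrow> E \<subseteq> \<Omega> \<Longrightarrow>
           monge_ampere \<Omega> u E \<le> monge_ampere \<Omega> \<phi> E"
  shows "(SUP x\<in>W. u x - \<phi> x) \<ge> (INF x\<in>frontier \<Omega>. u x - \<phi> x)"
proof (rule ccontr)
  note O = assms(1,4,5) and cu = assms(6) and cp = assms(8) and cvp = assms(9)
    and W = assms(10,11,12) and hyp = assms(13)
  define M where "M = (SUP x\<in>W. u x - \<phi> x)"
  define m where "m = (INF x\<in>frontier \<Omega>. u x - \<phi> x)"
  assume "\<not> (INF x\<in>frontier \<Omega>. u x - \<phi> x) \<le> (SUP x\<in>W. u x - \<phi> x)"
  then have Mm: "M < m" unfolding M_def m_def by simp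
  have ch: "continuous_on (closure \<Omega>) (\<lambda>x. u x - \<phi> x)" using cu cp by (intro continuous_intros)
  have Wc: "W \<subseteq> closure \<Omega>" using W closure_subset by blast
  have "compact ((\<lambda>x. u x - \<phi> x) ` W)"
    using compact_continuous_image[OF continuous_on_subset[OF ch Wc] W(1)] .
  then have "bdd_above ((\<lambda>x. u x - \<phi> x) ` W)" by (intro bounded_imp_bdd_above compact_imp_bounded)
  then have hW: "\<And>x. x \<in> W \<Longrightarrow> u x - \<phi> x \<le> M" unfolding M_def by (intro cSUP_upper)
  have Fc: "frontier \<Omega> \<subseteq> closure \<Omega>" by (simp add: frontier_def)
  have "compact (frontier \<Omega>)" using O(2) by (simp add: compact_frontier_bounded)
  then have "compact ((\<lambda>x. u x - \<phi> x) ` frontier \<Omega>)"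
    using compact_continuous_image[OF continuous_on_subset[OF ch Fc]] by blast
  then have "bdd_below ((\<lambda>x. u x - \<phi> x) ` frontier \<Omega>)" by (intro bounded_imp_bdd_below compact_imp_bounded)
  then have hF: "\<And>x. x \<in> frontier \<Omega> \<Longrightarrow> m \<le> u x - \<phi> x" unfolding m_def by (intro cINF_lower)
  have "compact (\<phi> ` closure \<Omega>)"
    using compact_continuous_image[OF cp] O by (simp add: compact_closure)
  then have "bounded (\<phi> ` closure \<Omega>)" by (rule compact_imp_bounded)
  then obtain B where "\<forall>z\<in>\<phi> ` closure \<Omega>. norm z \<le> B" unfolding bounded_iff by blast
  then have B: "\<And>y. y \<in> closure \<Omega> \<Longrightarrow> \<bar>\<phi> y\<bar> \<le> B" by auto
  obtain z0 where z0: "z0 \<in> W" using W(2) by blast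
  have "\<bar>\<phi> z0\<bar> \<le> B" using B z0 Wc by blast
  then have B0: "0 \<le> B" using abs_ge_zero[of "\<phi> z0"] by linarith
  define g where "g = (m - M) / 2"
  define c where "c = (M + m) / 2"
  define \<epsilon> where "\<epsilon> = g / (2 * (B + 1))"
  define lam where "lam = 1 + \<epsilon>"
  have gpos: "g > 0" using Mm g_def by simp
  have epos: "\<epsilon> > 0" using gpos B0 by (simp add: \<epsilon>_def)
  have eB: "\<epsilon> * B < g"
  proof -
    have "\<epsilon> * B = g * (B / (2 * (B + 1)))" by (simp add: \<epsilon>_def)
    also have "B / (2 * (B + 1)) < 1" using B0 by (simp add: field_simps)
    then have "g * (B / (2 * (B + 1))) < g * 1" using gpos by (intro mult_strict_left_mono)
    finally show ?thesis by simp
  qed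
  have epsphi: "\<bar>\<epsilon> * \<phi> y\<bar> \<le> \<epsilon> * B" if "y \<in> closure \<Omega>" for y
    using B[OF that] epos by (simp add: abs_mult mult_left_mono)
  define v where "v y = lam * \<phi> y + c" for y
  have cv: "continuous_on (closure \<Omega>) v" unfolding v_def using cp by (intro continuous_intros)
  define E where "E = closure \<Omega> \<inter> (\<lambda>y. v y - u y) -` {0..}"
  have Ecl: "closed E" unfolding E_def
    using cv cu by (intro continuous_closed_preimage continuous_intros) auto
  have vu: "v y - u y = c - (u y - \<phi> y) + \<epsilon> * \<phi> y" for y
    by (simp add: v_def lam_def algebra_simps)
  have EO: "E \<subseteq> \<Omega>"
  proof
    fix x assume x: "x \<in> E"
    show "x \<in> \<Omega>"
    proof (rule ccontr)
      assume "x \<notin> \<Omega>"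
      then have "x \<in> frontier \<Omega>" using x O(1) by (simp add: E_def frontier_def interior_open)
      then have "m \<le> u x - \<phi> x" by (rule hF)
      moreover have "\<bar>\<epsilon> * \<phi> x\<bar> \<le> \<epsilon> * B" using x E_def epsphi by blast
      moreover have "0 \<le> v x - u x" using x E_def by simp
      ultimately have "\<epsilon> * \<phi> x \<le> \<epsilon> * B" "m \<le> u x - \<phi> x" "0 \<le> v x - u x"
        using abs_ge_self[of "\<epsilon> * \<phi> x"] by linarith+
      then show False using vu[of x] eB unfolding c_def g_def by argo
    qed
  qed
  have Ecp: "compact E" unfolding compact_eq_bounded_closed using Ecl bounded_subset[OF O(2) EO] by blast
  have vW: "v x - u x > 0" if x: "x \<in> W" for x
  proof -
    have "u x - \<phi> x \<le> M" using hW x by blast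
    moreover have "\<bar>\<epsilon> * \<phi> x\<bar> \<le> \<epsilon> * B" using x Wc epsphi by blast
    ultimately have "- (\<epsilon> * B) \<le> \<epsilon> * \<phi> x" "u x - \<phi> x \<le> M"
      using abs_ge_minus_self[of "\<epsilon> * \<phi> x"] by linarith+
    then show "v x - u x > 0" using vu[of x] eB unfolding c_def g_def by argo
  qed
  have WE: "W \<subseteq> E" using vW Wc unfolding E_def by fastforce
  have outE: "u y > v y" if "y \<in> \<Omega>" "y \<notin> E" for y
    using that closure_subset unfolding E_def by auto
  obtain R where R: "\<And>y. y \<in> \<Omega> \<Longrightarrow> norm y \<le> R" using O(2) bounded_iff by blast
  define D where "D = 2 * R + 1"
  have D: "norm (y - z) \<le> D" if "y \<in> \<Omega>" "z \<in> \<Omega>" for y z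
    using R[OF that(1)] R[OF that(2)] norm_triangle_ineq4[of y z] unfolding D_def by linarith
  have "z0 \<in> \<Omega>" using W z0 by blast
  then have "norm z0 \<le> R" by (rule R)
  then have Dpos: "D > 0" using norm_ge_zero[of z0] unfolding D_def by argo
  define SU where "SU = (\<Union>x\<in>E. subdiff \<Omega> u x)"
  define SP where "SP = (\<Union>x\<in>E. subdiff \<Omega> \<phi> x)"
  have SUc: "closed SU" unfolding SU_def by (rule subdiff_closed[OF cu Ecp EO])
  have SPc: "closed SP" unfolding SP_def by (rule subdiff_closed[OF cp Ecp EO])
  have SPb: "bounded SP" unfolding SP_def by (rule subdiff_bounded[OF cp O(1,2) Ecp EO])
  \<comment> \<open>scaled slopes\<close>
  have incl1: "(*\<^sub>R) lam ` SP \<subseteq> SU"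
  proof
    fix P assume "P \<in> (*\<^sub>R) lam ` SP"
    then obtain p z where z: "z \<in> E" and p: "p \<in> subdiff \<Omega> \<phi> z" and P: "P = lam *\<^sub>R p"
      unfolding SP_def by blast
    have "P + 0 \<in> SU" unfolding SU_def
    proof (rule subdiff_touch[OF cu Ecp EO z, where \<alpha> = "v z - inner P z"])
      fix y assume y: "y \<in> \<Omega>" "y \<notin> E"
      have "\<phi> y \<ge> \<phi> z + inner p (y - z)" using p y unfolding subdiff_def by auto
      then have "lam * \<phi> y \<ge> lam * (\<phi> z + inner p (y - z))" using epos by (simp add: lam_def)
      then have "v y \<ge> v z - inner P z + inner P y"
        by (simp add: v_def P inner_diff_right algebra_simps)
      then show "u y > v z - inner P z + inner P y" using outE[OF y] by linarith
    next
      fix y assume "y \<in> \<Omega>" then show "norm (y - z) \<le> D" using D z EO by blast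
    next
      show "u z - (v z - inner P z + inner P z) \<le> - (norm 0 * D)" using z E_def by simp
    qed
    then show "P \<in> SU" by simp
  qed
  \<comment> \<open>a ball of slopes\<close>
  define epi where "epi = {(y, t). y \<in> closure \<Omega> \<and> v y \<le> t}"
  have epi_cl: "closed epi"
  proof -
    have "epi = (closure \<Omega> \<times> UNIV) \<inter> (\<lambda>w. snd w - v (fst w)) -` {0..}"
      unfolding epi_def by auto
    moreover have "continuous_on (closure \<Omega> \<times> UNIV) (\<lambda>w. snd w - v (fst w))"
      by (intro continuous_intros continuous_on_compose2[OF cv]) auto
    ultimately show ?thesis
      using continuous_closed_preimage[OF _ closed_Times[OF closed_closure closed_UNIV] closed_atLeast]
      by metis
  qed
  have cvv: "convex_on (closure \<Omega>) v"
  proof -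
    have "convex_on (closure \<Omega>) (\<lambda>y. lam * \<phi> y)" using cvp epos unfolding lam_def
      by (intro convex_on_cmul) auto
    moreover have "convex_on (closure \<Omega>) (\<lambda>y. c)"
      using convex_closure[OF O(3)] by (simp add: convex_on_const)
    ultimately show ?thesis unfolding v_def by (rule convex_on_add)
  qed
  have epi_cv: "convex epi"
    unfolding convex_def
  proof (intro ballI allI impI)
    fix w1 w2 :: "'a \<times> real" and a b :: real
    assume w: "w1 \<in> epi" "w2 \<in> epi" and ab: "0 \<le> a" "0 \<le> b" "a + b = 1"
    obtain y1 t1 y2 t2 where w12: "w1 = (y1, t1)" "w2 = (y2, t2)" by fastforce
    have y: "y1 \<in> closure \<Omega>" "y2 \<in> closure \<Omega>" "v y1 \<le> t1" "v y2 \<le> t2" using w w12 epi_def by auto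
    have "a *\<^sub>R y1 + b *\<^sub>R y2 \<in> closure \<Omega>"
      using convex_closure[OF O(3)] y ab unfolding convex_def by blast
    moreover have "v (a *\<^sub>R y1 + b *\<^sub>R y2) \<le> a * v y1 + b * v y2"
    proof -
      have "v ((1 - b) *\<^sub>R y1 + b *\<^sub>R y2) \<le> (1 - b) * v y1 + b * v y2"
        using ab y(1,2) by (intro convex_onD[OF cvv]) auto
      moreover have "a = 1 - b" using ab by simp
      ultimately show ?thesis by simp
    qed
    moreover have "a * v y1 + b * v y2 \<le> a * t1 + b * t2"
      using y ab by (intro add_mono mult_left_mono) auto
    ultimately show "a *\<^sub>R w1 + b *\<^sub>R w2 \<in> epi" using w12 epi_def by auto
  qed
  define t0 where "t0 = (u z0 + v z0) / 2"
  have z0E: "z0 \<in> E" using WE z0 by blast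
  have vz0: "v z0 - u z0 > 0" using vW z0 by blast
  have "(z0, t0) \<notin> epi" using vz0 by (simp add: epi_def t0_def)
  then obtain a b where ab: "inner a (z0, t0) < b" "\<forall>x\<in>epi. inner a x > b"
    using separating_hyperplane_closed_point[OF epi_cv epi_cl] by blast
  obtain a1 \<beta> where a: "a = (a1, \<beta>)" by fastforce
  have z0c: "z0 \<in> closure \<Omega>" using z0 Wc by blast
  have "(z0, v z0) \<in> epi" using z0c by (simp add: epi_def)
  then have "b < inner a (z0, v z0)" using ab(2) by blast
  then have h1: "inner a1 z0 + \<beta> * v z0 > b" using a by simp
  have h2: "inner a1 z0 + \<beta> * t0 < b" using ab a by simp
  have bpos: "\<beta> > 0"
  proof -
    have "\<beta> * (v z0 - t0) > 0" using h1 h2 by (simp add: algebra_simps)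
    moreover have "v z0 - t0 > 0" using vz0 by (simp add: t0_def)
    ultimately show ?thesis by (simp add: zero_less_mult_iff)
  qed
  define P0 where "P0 = (- (1 / \<beta>)) *\<^sub>R a1"
  define \<alpha> where "\<alpha> = b / \<beta>"
  have ell: "\<alpha> + inner P0 y < v y" if "y \<in> closure \<Omega>" for y
  proof -
    have "(y, v y) \<in> epi" using that by (simp add: epi_def)
    then have "b < inner a (y, v y)" using ab(2) by blast
    then have "inner a1 y + \<beta> * v y > b" using a by simp
    then have "b / \<beta> - inner a1 y / \<beta> < v y" using bpos by (simp add: field_simps)
    then show ?thesis by (simp add: \<alpha>_def P0_def)
  qed
  have ellz: "\<alpha> + inner P0 z0 > t0"
  proof -
    have "b / \<beta> - inner a1 z0 / \<beta> > t0" using h2 bpos by (simp add: field_simps)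
    then show ?thesis by (simp add: \<alpha>_def P0_def)
  qed
  define d where "d = \<alpha> + inner P0 z0 - u z0"
  have dpos: "d > 0" using ellz vz0 by (simp add: d_def t0_def)
  define r where "r = d / D"
  have rpos: "r > 0" using dpos Dpos by (simp add: r_def)
  have incl2: "ball P0 r \<subseteq> SU"
  proof
    fix Q assume Q: "Q \<in> ball P0 r"
    define q where "q = Q - P0"
    have nq: "norm q < r" using Q by (simp add: q_def dist_norm norm_minus_commute)
    have "P0 + q \<in> SU" unfolding SU_def
    proof (rule subdiff_touch[OF cu Ecp EO z0E, where \<alpha> = \<alpha>])
      fix y assume y: "y \<in> \<Omega>" "y \<notin> E"
      have "y \<in> closure \<Omega>" using y closure_subset by blast
      then show "u y > \<alpha> + inner P0 y" using outE[OF y] ell[of y] by linarith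
    next
      fix y assume "y \<in> \<Omega>" then show "norm (y - z0) \<le> D" using D z0E EO by blast
    next
      have "norm q * D \<le> r * D" using nq Dpos by simp
      also have "\<dots> = d" using Dpos by (simp add: r_def)
      finally show "u z0 - (\<alpha> + inner P0 z0) \<le> - (norm q * D)" by (simp add: d_def)
    qed
    then show "Q \<in> SU" by (simp add: q_def)
  qed
  \<comment> \<open>measures\<close>
  have SUb: "SU \<in> sets borel" using SUc by (rule borel_closed)
  have SPbo: "SP \<in> sets borel" using SPc by (rule borel_closed)
  have "monge_ampere \<Omega> u E \<le> monge_ampere \<Omega> \<phi> E"
    using hyp[OF borel_closed[OF Ecl] WE EO] .
  moreover have "monge_ampere \<Omega> u E = emeasure lborel SU"
    unfolding monge_ampere_def SU_def[symmetric] using SUb by simp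
  moreover have "monge_ampere \<Omega> \<phi> E = emeasure lborel SP"
    unfolding monge_ampere_def SP_def[symmetric] using SPbo by simp
  ultimately have MUP: "emeasure lborel SU \<le> emeasure lborel SP" by simp
  have SPcp: "compact SP" by (simp add: compact_eq_bounded_closed SPc SPb)
  have lpos: "lam > 0" using epos by (simp add: lam_def)
  have "emeasure lborel ((*\<^sub>R) lam ` SP) \<le> emeasure lborel SU"
    using incl1 SUb by (intro emeasure_mono) auto
  then have "ennreal (lam ^ DIM('a)) * emeasure lborel SP \<le> emeasure lborel SU"
    by (simp add: emeasure_scale_compact[OF SPcp lpos])
  then have sc: "ennreal (lam ^ DIM('a)) * emeasure lborel SP \<le> emeasure lborel SP"
    using MUP by (rule order_trans)
  obtain R2 where "\<forall>x\<in>SP. norm x \<le> R2" using SPb unfolding bounded_iff by blast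
  then have "SP \<subseteq> cball 0 R2" by auto
  then have "emeasure lborel SP \<le> emeasure lborel (cball (0::'a) R2)" by (intro emeasure_mono) auto
  then have fin: "emeasure lborel SP < \<infinity>"
    using emeasure_lborel_cball_finite[of "0::'a" R2] by (rule le_less_trans)
  obtain s where s: "emeasure lborel SP = ennreal s" "s \<ge> 0"
    using fin by (cases "emeasure lborel SP") auto
  have l1: "lam ^ DIM('a) > 1" using epos by (intro one_less_power) (auto simp: lam_def)
  have "ennreal (lam ^ DIM('a) * s) \<le> ennreal s" using sc s lpos by (simp add: ennreal_mult)
  then have "lam ^ DIM('a) * s \<le> s" using s by (simp add: ennreal_le_iff)
  then have "s * (lam ^ DIM('a) - 1) \<le> 0" by (simp add: algebra_simps)
  then have "s \<le> 0" using l1 by (auto simp: mult_le_0_iff)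
  then have "s = 0" using s(2) by simp
  then have "emeasure lborel SU \<le> 0" using MUP s by simp
  moreover have "emeasure lborel (ball P0 r) \<le> emeasure lborel SU"
    using incl2 SUb by (intro emeasure_mono) auto
  moreover have "emeasure lborel (ball P0 r) > 0"
    using rpos by (simp add: emeasure_ball)
  ultimately show False by simp
qed

end
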